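(* Let $\mathtt{a},\mathtt{b}\in\Sigma$ be distinct letters. None of the following languages is in $\mathcal{L}(\mathsf{FC})$: $L_1=\{\mathtt{a}^n(\mathtt{ba})^n : n\in\mathbb{N}\}$; $L_2=\{\mathtt{a}^i(\mathtt{ba})^j : 1\le i\le j\}$; $L_3=\{\mathtt{b}^n\mathtt{a}^m\mathtt{b}^{n+m} : m,n\in\mathbb{N}\}$; $L_4=\{\mathtt{b}^n\mathtt{a}^m\mathtt{b}^{n\cdot m} : m,n\in\mathbb{N}\}$; $L_5=\{(\mathtt{abaabb})^m(\mathtt{bbaaba})^m : m\in\mathbb{N}\}$; $L_6=\{\mathtt{a}^n\mathtt{b}^n(\mathtt{ab})^n : n\in\mathbb{N}\}$.
   Context: $\Sigma$ is a fixed finite alphabet. For $w \in \Sigma^*$, $\mathsf{Facs}(w)$ is the set of all factors of $w$. The structure $\mathfrak{A}_w$ representing $w$ has universe $\mathsf{Facs}(w)\cup\{\perp\}$, a ternary relation $R_\circ=\{(x,y,z)\in\mathsf{Facs}(w)^3 : x=y\cdot z\}$, for each letter a constant interpreted as that letter if it occurs in $w$ and as $\perp$ otherwise, and a constant $\varepsilon$ interpreted as the empty word. $\mathsf{FC}$ is first-order logic over such structures, with atomic formulas $(x \mathbin{\dot=} y\cdot z)$ (meaning $R_\circ(x,y,z)$) where $x,y,z$ are variables, letters of $\Sigma$, or $\varepsilon$, closed under $\land,\lor,\neg,\exists,\forall$; quantified variables range over $\mathsf{Facs}(w)$. For a sentence $\varphi$, $\mathcal{L}(\varphi)=\{w\in\Sigma^*:\mathfrak{A}_w\models\varphi\}$,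 and $\mathcal{L}(\mathsf{FC})$ is the class of all such languages. *)

theory Defs
  imports Main "HOL-Library.Sublist"
begin

datatype 'a fc_term = FVar nat | FLet 'a | FEps

datatype 'a fc =
    FCat "'a fc_term" "'a fc_term" "'a fc_term"   (* x = y . z *)
  | FAnd "'a fc" "'a fc"
  | FOr "'a fc" "'a fc"
  | FNot "'a fc"
  | FEx nat "'a fc"
  | FAll nat "'a fc"

definition facs :: "'a list \<Rightarrow> 'a list set" where
  "facs w = {u. sublist u w}"

text \<open>Interpretation of a term in the structure of w: None represents bottom.
  Letters not occurring in w are interpreted as bottom.\<close>
fun term_val :: "'a list \<Rightarrow> (nat \<Rightarrow> 'a list option) \<Rightarrow> 'a fc_term \<Rightarrow> 'a list option" where
  "term_val w \<sigma> (FVar x) = \<sigma> x"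
| "term_val w \<sigma> (FLet c) = (if c \<in> set w then Some [c] else None)"
| "term_val w \<sigma> FEps = Some []"

text \<open>Satisfaction; quantified variables range over facs w. R_o only relates factors.\<close>
fun fc_sat :: "'a list \<Rightarrow> (nat \<Rightarrow> 'a list option) \<Rightarrow> 'a fc \<Rightarrow> bool" where
  "fc_sat w \<sigma> (FCat s t u) =
     (\<exists>x y z. term_val w \<sigma> s = Some x \<and> term_val w \<sigma> t = Some y \<and> term_val w \<sigma> u = Some z
        \<and> x \<in> facs w \<and> y \<in> facs w \<and> z \<in> facs w \<and> x = y @ z)"
| "fc_sat w \<sigma> (FAnd \<phi> \<psi>) = (fc_sat w \<sigma> \<phi> \<and> fc_sat w \<sigma> \<psi>)"
| "fc_sat w \<sigma> (FOr \<phi> \<psi>) = (fc_sat w \<sigma> \<phi> \<or> fc_sat w \<sigma> \<psi>)"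
| "fc_sat w \<sigma> (FNot \<phi>) = (\<not> fc_sat w \<sigma> \<phi>)"
| "fc_sat w \<sigma> (FEx x \<phi>) = (\<exists>u \<in> facs w. fc_sat w (\<sigma>(x := Some u)) \<phi>)"
| "fc_sat w \<sigma> (FAll x \<phi>) = (\<forall>u \<in> facs w. fc_sat w (\<sigma>(x := Some u)) \<phi>)"

fun tvars :: "'a fc_term \<Rightarrow> nat set" where
  "tvars (FVar x) = {x}"
| "tvars (FLet c) = {}"
| "tvars FEps = {}"

fun free_vars :: "'a fc \<Rightarrow> nat set" where
  "free_vars (FCat s t u) = tvars s \<union> tvars t \<union> tvars u"
| "free_vars (FAnd \<phi> \<psi>) = free_vars \<phi> \<union> free_vars \<psi>"
| "free_vars (FOr \<phi> \<psi>) = free_vars \<phi> \<union> free_vars \<psi>"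
| "free_vars (FNot \<phi>) = free_vars \<phi>"
| "free_vars (FEx x \<phi>) = free_vars \<phi> - {x}"
| "free_vars (FAll x \<phi>) = free_vars \<phi> - {x}"

definition fc_sentence :: "'a fc \<Rightarrow> bool" where
  "fc_sentence \<phi> \<longleftrightarrow> free_vars \<phi> = {}"

text \<open>For a sentence the assignment is irrelevant; we use the empty one.\<close>
definition fc_lang :: "'a fc \<Rightarrow> 'a list set" where
  "fc_lang \<phi> = {w. fc_sat w (\<lambda>_. None) \<phi>}"

definition FC_languages :: "('a::finite) list set set" where
  "FC_languages = {L. \<exists>\<phi>. fc_sentence \<phi> \<and> L = fc_lang \<phi>}"

definition pw :: "'a list \<Rightarrow> nat \<Rightarrow> 'a list" where
  "pw u n = concat (replicate n u)"

end

theory Submission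
  imports Defs
begin

inductive RU :: "('x \<times> 'y) set \<Rightarrow> bool" where
  RU_empty: "RU {}"
| RU_rect: "RU (A \<times> B)"
| RU_Un: "RU S \<Longrightarrow> RU T \<Longrightarrow> RU (S \<union> T)"

lemma RU_Int_rect: "RU T \<Longrightarrow> RU ((A \<times> B) \<inter> T)"
proof (induction rule: RU.induct)
  case RU_empty then show ?case by (simp add: RU.RU_empty)
next
  case (RU_rect C D) then show ?case by (simp add: Times_Int_Times RU.RU_rect)
next
  case (RU_Un S T) then show ?case by (simp add: Int_Un_distrib RU.RU_Un)
qed

lemma RU_Int: "RU S \<Longrightarrow> RU T \<Longrightarrow> RU (S \<inter> T)"
proof (induction rule: RU.induct)
  case RU_empty then show ?case by (simp add: RU.RU_empty)
next
  case (RU_rect C D) then show ?case by (simp add: RU_Int_rect)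
next
  case (RU_Un S T') then show ?case by (simp add: Int_Un_distrib2 RU.RU_Un)
qed

lemma RU_UNIV: "RU UNIV"
  using RU_rect[of UNIV UNIV] by simp

lemma RU_Compl: "RU S \<Longrightarrow> RU (- S)"
proof (induction rule: RU.induct)
  case RU_empty then show ?case by (simp add: RU_UNIV)
next
  case (RU_rect A B)
  have "- (A \<times> B) = (- A) \<times> UNIV \<union> UNIV \<times> (- B)" by auto
  then show ?case by (simp add: RU.RU_rect RU.RU_Un)
next
  case (RU_Un S T) then show ?case by (simp add: RU_Int)
qed

lemma RU_pull: "RU S \<Longrightarrow> RU {(a,b). (f a, g b) \<in> S}"
proof (induction rule: RU.induct)
  case RU_empty then show ?case by (simp add: RU.RU_empty)
next
  case (RU_rect A B)
  have "{(a,b). (f a, g b) \<in> A \<times> B} = (f -` A) \<times> (g -` B)" by auto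
  then show ?case by (simp add: RU.RU_rect)
next
  case (RU_Un S T)
  have "{(a,b). (f a, g b) \<in> S \<union> T} = {(a,b). (f a, g b) \<in> S} \<union> {(a,b). (f a, g b) \<in> T}" by auto
  then show ?case using RU_Un by (simp add: RU.RU_Un)
qed

lemma RU_proj: "RU S \<Longrightarrow> RU {(a,b). \<exists>l r. ((a,l),(b,r)) \<in> S}"
proof (induction rule: RU.induct)
  case RU_empty then show ?case by (simp add: RU.RU_empty)
next
  case (RU_rect A B)
  have "{(a,b). \<exists>l r. ((a,l),(b,r)) \<in> A \<times> B} = {a. \<exists>l. (a,l) \<in> A} \<times> {b. \<exists>r. (b,r) \<in> B}" by auto
  then show ?case by (simp add: RU.RU_rect)
next
  case (RU_Un S T)
  have "{(a,b). \<exists>l r. ((a,l),(b,r)) \<in> S \<union> T} = {(a,b). \<exists>l r. ((a,l),(b,r)) \<in> S} \<union> {(a,b). \<exists>l r. ((a,l),(b,r)) \<in> T}" by auto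
  then show ?case using RU_Un by (simp add: RU.RU_Un)
qed

lemma RU_UN: "finite I \<Longrightarrow> (\<And>i. i \<in> I \<Longrightarrow> RU (F i)) \<Longrightarrow> RU (\<Union>i\<in>I. F i)"
  by (induction rule: finite_induct) (auto intro: RU.intros)

lemma RU_fin: "RU S \<Longrightarrow> \<exists>F. finite F \<and> S = (\<Union>(A,B)\<in>F. A \<times> B)"
proof (induction rule: RU.induct)
  case RU_empty then show ?case by (intro exI[of _ "{}"]) auto
next
  case (RU_rect A B) then show ?case by (intro exI[of _ "{(A,B)}"]) auto
next
  case (RU_Un S T)
  then obtain F G where "finite F" "S = (\<Union>(A,B)\<in>F. A \<times> B)" "finite G" "T = (\<Union>(A,B)\<in>G. A \<times> B)" by blast
  then show ?case by (intro exI[of _ "F \<union> G"]) auto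
qed

lemma RU_pigeon:
  assumes "RU D" "\<And>n::nat. (f n, g n) \<in> D"
  shows "\<exists>n m. n \<noteq> m \<and> (f n, g m) \<in> D \<and> (f m, g n) \<in> D"
proof -
  obtain F where F: "finite F" "D = (\<Union>(A,B)\<in>F. A \<times> B)" using RU_fin[OF assms(1)] by blast
  have "\<forall>n. \<exists>r. r \<in> F \<and> (f n, g n) \<in> fst r \<times> snd r" using assms(2) F(2) by fastforce
  then obtain r where r: "\<And>n. r n \<in> F \<and> (f n, g n) \<in> fst (r n) \<times> snd (r n)" by metis
  have "range r \<subseteq> F" using r by auto
  then have "finite (range r)" using F(1) finite_subset by blast
  then have "\<not> inj r" using finite_imageD[of r UNIV] by auto
  then obtain n m where nm: "n \<noteq> m" "r n = r m" unfolding inj_def by blast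
  have "(f n, g m) \<in> fst (r n) \<times> snd (r n)" "(f m, g n) \<in> fst (r n) \<times> snd (r n)"
    using r[of n] r[of m] nm(2) by auto
  moreover have "fst (r n) \<times> snd (r n) \<subseteq> D" using r[of n] F(2) by (cases "r n") auto
  ultimately show ?thesis using nm(1) by blast
qed

definition valid :: "('p \<Rightarrow> 'a list) \<Rightarrow> ('q \<Rightarrow> 'a list) \<Rightarrow> 'p \<Rightarrow> 'q \<Rightarrow> 'a list \<Rightarrow> 'a list \<Rightarrow> bool" where
  "valid X Y p q s t \<longleftrightarrow> sublist s (X p) \<and> sublist t (Y q) \<and> (s \<noteq> [] \<and> t \<noteq> [] \<longrightarrow> suffix s (X p) \<and> prefix t (Y q))"

lemma valid_RU: "RU {((p,s),(q,t)). valid X Y p q s t}"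
proof -
  have "{((p,s),(q,t)). valid X Y p q s t} =
     {(p,s). sublist s (X p) \<and> s = []} \<times> {(q,t). sublist t (Y q)}
   \<union> {(p,s). sublist s (X p)} \<times> {(q,t). sublist t (Y q) \<and> t = []}
   \<union> {(p,s). suffix s (X p)} \<times> {(q,t). prefix t (Y q)}"
    unfolding valid_def by auto
  then show ?thesis by (simp add: RU.intros)
qed

lemma sublist_singleton: "sublist [c] w \<longleftrightarrow> c \<in> set w"
  by (auto simp: sublist_def in_set_conv_decomp)

lemma valid_fac: "valid X Y p q s t \<Longrightarrow> s @ t \<in> facs (X p @ Y q)"
  unfolding valid_def facs_def
proof (elim conjE)
  assume a: "sublist s (X p)" "sublist t (Y q)" "s \<noteq> [] \<and> t \<noteq> [] \<longrightarrow> suffix s (X p) \<and> prefix t (Y q)"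
  show "s @ t \<in> {u. sublist u (X p @ Y q)}"
  proof (cases "s = []")
    case True then show ?thesis using a by (simp add: sublist_append)
  next
    case False
    show ?thesis
    proof (cases "t = []")
      case True then show ?thesis using a by (simp add: sublist_append)
    next
      case f2: False
      then show ?thesis using a False unfolding sublist_append by blast
    qed
  qed
qed

lemma fac_valid: "u \<in> facs (X p @ Y q) \<Longrightarrow> \<exists>s t. valid X Y p q s t \<and> u = s @ t"
proof -
  assume "u \<in> facs (X p @ Y q)"
  then have "sublist u (X p) \<or> sublist u (Y q) \<or> (\<exists>xs1 xs2. u = xs1 @ xs2 \<and> suffix xs1 (X p) \<and> prefix xs2 (Y q))"
    by (simp add: facs_def sublist_append)
  then show ?thesis
  proof (elim disjE exE conjE)
    assume "sublist u (X p)" then show ?thesis by (intro exI[of _ u] exI[of _ "[]"]) (simp add: valid_def)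
  next
    assume "sublist u (Y q)" then show ?thesis by (intro exI[of _ "[]"] exI[of _ u]) (simp add: valid_def)
  next
    fix xs1 xs2 assume "u = xs1 @ xs2" "suffix xs1 (X p)" "prefix xs2 (Y q)"
    then show ?thesis by (intro exI[of _ xs1] exI[of _ xs2]) (simp add: valid_def)
  qed
qed

definition enc :: "(nat \<Rightarrow> 'a list option) \<Rightarrow> (nat \<Rightarrow> 'a list option) \<Rightarrow> nat \<Rightarrow> 'a list option" where
  "enc lv rv x = (case lv x of Some s \<Rightarrow> (case rv x of Some t \<Rightarrow> Some (s @ t) | None \<Rightarrow> None) | None \<Rightarrow> None)"

lemma enc_upd: "enc (lv(x := Some s)) (rv(x := Some t)) = (enc lv rv)(x := Some (s @ t))"
proof (rule ext)
  fix y show "enc (lv(x := Some s)) (rv(x := Some t)) y = ((enc lv rv)(x := Some (s @ t))) y"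
    by (cases "y = x") (simp_all add: enc_def split: option.splits)
qed

lemma enc_Some: "enc lv rv x = Some u \<longleftrightarrow> (\<exists>s t. lv x = Some s \<and> rv x = Some t \<and> u = s @ t)"
  by (auto simp: enc_def split: option.splits)

definition allvalid where
  "allvalid X Y p q lv rv \<longleftrightarrow> (\<forall>x s t. lv x = Some s \<longrightarrow> rv x = Some t \<longrightarrow> valid X Y p q s t)"

lemma allvalid_upd: "allvalid X Y p q lv rv \<Longrightarrow> valid X Y p q s t \<Longrightarrow> allvalid X Y p q (lv(x := Some s)) (rv(x := Some t))"
  by (auto simp: allvalid_def)

fun tmatch :: "'a fc_term \<Rightarrow> (nat \<Rightarrow> 'a list option) \<Rightarrow> (nat \<Rightarrow> 'a list option) \<Rightarrow> 'a list \<Rightarrow> 'a list \<Rightarrow> bool" where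
  "tmatch (FVar x) lv rv s t = (lv x = Some s \<and> rv x = Some t)"
| "tmatch (FLet c) lv rv s t = (s @ t = [c])"
| "tmatch FEps lv rv s t = (s = [] \<and> t = [])"

lemma tmatch_RU: "RU {(((p::'p,lv),s),((q::'q,rv),t)). tmatch tm lv rv s t}"
proof (cases tm)
  case (FVar x)
  have "{(((p::'p,lv),s),((q::'q,rv),t)). tmatch tm lv rv s t} = {((p,lv),s). lv x = Some s} \<times> {((q,rv),t). rv x = Some t}"
    using FVar by auto
  then show ?thesis by (simp add: RU.intros)
next
  case (FLet c)
  have "{(((p::'p,lv),s),((q::'q,rv),t)). tmatch tm lv rv s t} =
    {((p::'p,lv::nat \<Rightarrow> 'a list option),s). s = [c]} \<times> {((q::'q,rv::nat \<Rightarrow> 'a list option),t). t = []}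
    \<union> {((p::'p,lv::nat \<Rightarrow> 'a list option),s). s = []} \<times> {((q::'q,rv::nat \<Rightarrow> 'a list option),t). t = [c]}"
    using FLet by (auto simp: append_eq_Cons_conv)
  then show ?thesis by (simp add: RU.intros)
next
  case FEps
  have "{(((p::'p,lv),s),((q::'q,rv),t)). tmatch tm lv rv s t} =
    {((p::'p,lv::nat \<Rightarrow> 'a list option),s). s = []} \<times> {((q::'q,rv::nat \<Rightarrow> 'a list option),t). t = []}"
    using FEps by auto
  then show ?thesis by (simp add: RU.intros)
qed

lemma term_lemma:
  assumes "allvalid X Y p q lv rv"
  shows "(term_val (X p @ Y q) (enc lv rv) tm = Some u \<and> u \<in> facs (X p @ Y q)) \<longleftrightarrow>
         (\<exists>s t. valid X Y p q s t \<and> tmatch tm lv rv s t \<and> u = s @ t)"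
proof (cases tm)
  case (FVar x)
  then show ?thesis using assms by (auto simp: enc_Some allvalid_def intro: valid_fac)
next
  case (FLet c)
  have "c \<in> set (X p @ Y q) \<longleftrightarrow> [c] \<in> facs (X p @ Y q)" by (simp add: facs_def sublist_singleton)
  then show ?thesis using FLet valid_fac[of X Y p q] fac_valid[of "[c]" X p Y q] by (auto simp del: append_is_Nil_conv) (metis+)
next
  case FEps
  have "valid X Y p q [] []" by (simp add: valid_def)
  then show ?thesis using FEps by (auto simp: facs_def)
qed

lemma sl_trans: "sublist a b \<Longrightarrow> sublist b c \<Longrightarrow> sublist a c"
  using sublist_order.order.trans by blast

lemma cat_cases:
  assumes eq: "s1 @ t1 = s2 @ t2 @ s3 @ t3"
    and bound: "\<And>z. sublist z Xp \<Longrightarrow> sublist z Yq \<Longrightarrow> length z \<le> K"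
    and S: "sublist s1 Xp" "sublist s2 Xp" "sublist s3 Xp"
    and T: "sublist t1 Yq" "sublist t2 Yq" "sublist t3 Yq"
  shows "\<exists>z w. length z \<le> K \<and> length w \<le> K \<and>
    ((s2 = s1 @ z \<and> s3 = w \<and> t1 = z @ t2 @ w @ t3)
   \<or> (s1 = s2 @ z \<and> s3 = w \<and> (\<exists>z'. t2 = z @ z' \<and> t1 = z' @ w @ t3))
   \<or> ((\<exists>y. s1 = s2 @ z @ y \<and> s3 = y @ w) \<and> t2 = z \<and> t1 = w @ t3)
   \<or> (s1 = s2 @ z @ s3 @ w \<and> t2 = z \<and> t3 = w @ t1))"
proof -
  have sm: "sublist x (u @ x @ v)" for x u v :: "'a list" by (rule sublist_appendI)
  have BB: "sublist z x \<Longrightarrow> sublist x Xp \<Longrightarrow> sublist z y \<Longrightarrow> sublist y Yq \<Longrightarrow> length z \<le> K" for z x y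
    using bound sl_trans by blast
  from eq obtain us where A: "(s1 = s2 @ us \<and> us @ t1 = t2 @ s3 @ t3) \<or> (s1 @ us = s2 \<and> t1 = us @ t2 @ s3 @ t3)"
    unfolding append_eq_append_conv2 by blast
  then show ?thesis
  proof
    assume a: "s1 @ us = s2 \<and> t1 = us @ t2 @ s3 @ t3"
    have "length us \<le> K"
      by (rule BB[OF _ S(2) _ T(1)]) (use a sm[of us s1 "[]"] sm[of us "[]" "t2 @ s3 @ t3"] in auto)
    moreover have "length s3 \<le> K"
      by (rule BB[OF _ S(3) _ T(1)]) (use a sm[of s3 "us @ t2" t3] in auto)
    ultimately show ?thesis using a by blast
  next
    assume b: "s1 = s2 @ us \<and> us @ t1 = t2 @ s3 @ t3"
    then obtain vs where B: "(us = t2 @ vs \<and> vs @ t1 = s3 @ t3) \<or> (us @ vs = t2 \<and> t1 = vs @ s3 @ t3)"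
      unfolding append_eq_append_conv2 by blast
    then show ?thesis
    proof
      assume b1: "us @ vs = t2 \<and> t1 = vs @ s3 @ t3"
      have "length us \<le> K"
        by (rule BB[OF _ S(1) _ T(2)]) (use b b1 sm[of us s2 "[]"] sm[of us "[]" vs] in auto)
      moreover have "length s3 \<le> K"
        by (rule BB[OF _ S(3) _ T(1)]) (use b1 sm[of s3 vs t3] in auto)
      ultimately show ?thesis using b b1 by blast
    next
      assume b2: "us = t2 @ vs \<and> vs @ t1 = s3 @ t3"
      have t2K: "length t2 \<le> K"
        by (rule BB[OF _ S(1) _ T(2)]) (use b b2 sm[of t2 s2 vs] in auto)
      from b2 obtain ws where C: "(vs = s3 @ ws \<and> ws @ t1 = t3) \<or> (vs @ ws = s3 \<and> t1 = ws @ t3)"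
        unfolding append_eq_append_conv2 by blast
      then show ?thesis
      proof
        assume c1: "vs @ ws = s3 \<and> t1 = ws @ t3"
        have "length ws \<le> K"
          by (rule BB[OF _ S(3) _ T(1)]) (use c1 sm[of ws vs "[]"] sm[of ws "[]" t3] in auto)
        then show ?thesis using b b2 c1 t2K by blast
      next
        assume c2: "vs = s3 @ ws \<and> ws @ t1 = t3"
        have "length ws \<le> K"
          by (rule BB[OF _ S(1) _ T(3)]) (use b b2 c2 sm[of ws "s2 @ t2 @ s3" "[]"] sm[of ws "[]" t1] in auto)
        then show ?thesis using b b2 c2 t2K by auto
      qed
    qed
  qed
qed

lemma catV_RU:
  fixes X :: "'p \<Rightarrow> ('a::finite) list" and Y :: "'q \<Rightarrow> 'a list"
  assumes bnd: "\<And>p q z. sublist z (X p) \<Longrightarrow> sublist z (Y q) \<Longrightarrow> length z \<le> K"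
  shows "RU {((p,(s1,s2,s3)),(q,(t1,t2,t3))). valid X Y p q s1 t1 \<and> valid X Y p q s2 t2 \<and> valid X Y p q s3 t3 \<and> s1 @ t1 = s2 @ t2 @ s3 @ t3}"
proof -
  define Wk where "Wk = {z::'a list. length z \<le> K}"
  have finW: "finite Wk" unfolding Wk_def using finite_lists_length_le[of "UNIV::'a set" K] by simp
  define V3 where "V3 = {((p,(s1,s2,s3)),(q,(t1,t2,t3))). valid X Y p q s1 t1 \<and> valid X Y p q s2 t2 \<and> valid X Y p q s3 t3}"
  define P where "P = (\<lambda>(z::'a list, w::'a list).
      ({(p::'p,(s1,s2,s3)). s2 = s1 @ z \<and> s3 = w} \<times> {(q::'q,(t1,t2,t3)). t1 = z @ t2 @ w @ t3})
    \<union> ({(p::'p,(s1,s2,s3)). s1 = s2 @ z \<and> s3 = w} \<times> {(q::'q,(t1,t2,t3)). \<exists>z'. t2 = z @ z' \<and> t1 = z' @ w @ t3})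
    \<union> ({(p::'p,(s1,s2,s3)). \<exists>y. s1 = s2 @ z @ y \<and> s3 = y @ w} \<times> {(q::'q,(t1,t2,t3)). t2 = z \<and> t1 = w @ t3})
    \<union> ({(p::'p,(s1,s2,s3)). s1 = s2 @ z @ s3 @ w} \<times> {(q::'q,(t1,t2,t3)). t2 = z \<and> t3 = w @ t1}))"
  have RUP: "RU (P i)" for i
    unfolding P_def by (cases i) (simp add: RU.intros)
  have pv: "RU {(a,b). valid X Y (fp a) (fq b) (fs a) (ft b)}" for fp fq fs ft
    using RU_pull[OF valid_RU, of "\<lambda>a. (fp a, fs a)" "\<lambda>b. (fq b, ft b)" X Y] by simp
  have "V3 = {(a,b). valid X Y (fst a) (fst b) (fst (snd a)) (fst (snd b))}
      \<inter> {(a,b). valid X Y (fst a) (fst b) (fst (snd (snd a))) (fst (snd (snd b)))}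
      \<inter> {(a,b). valid X Y (fst a) (fst b) (snd (snd (snd a))) (snd (snd (snd b)))}"
    unfolding V3_def by auto
  then have RV3: "RU V3" by (simp only:) (intro RU_Int pv)
  have eqset: "{((p,(s1,s2,s3)),(q,(t1,t2,t3))). valid X Y p q s1 t1 \<and> valid X Y p q s2 t2 \<and> valid X Y p q s3 t3 \<and> s1 @ t1 = s2 @ t2 @ s3 @ t3}
     = V3 \<inter> (\<Union>i\<in>Wk \<times> Wk. P i)"
  proof (intro equalityI subsetI)
    fix e assume "e \<in> {((p,(s1,s2,s3)),(q,(t1,t2,t3))). valid X Y p q s1 t1 \<and> valid X Y p q s2 t2 \<and> valid X Y p q s3 t3 \<and> s1 @ t1 = s2 @ t2 @ s3 @ t3}"
    then obtain p s1 s2 s3 q t1 t2 t3 where e: "e = ((p,(s1,s2,s3)),(q,(t1,t2,t3)))"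
      and v: "valid X Y p q s1 t1" "valid X Y p q s2 t2" "valid X Y p q s3 t3" and eq: "s1 @ t1 = s2 @ t2 @ s3 @ t3"
      by auto
    have SS: "sublist s1 (X p)" "sublist s2 (X p)" "sublist s3 (X p)"
      and TT: "sublist t1 (Y q)" "sublist t2 (Y q)" "sublist t3 (Y q)"
      using v by (simp_all add: valid_def)
    obtain z w where zw: "length z \<le> K" "length w \<le> K" and
      cs: "(s2 = s1 @ z \<and> s3 = w \<and> t1 = z @ t2 @ w @ t3)
   \<or> (s1 = s2 @ z \<and> s3 = w \<and> (\<exists>z'. t2 = z @ z' \<and> t1 = z' @ w @ t3))
   \<or> ((\<exists>y. s1 = s2 @ z @ y \<and> s3 = y @ w) \<and> t2 = z \<and> t1 = w @ t3)
   \<or> (s1 = s2 @ z @ s3 @ w \<and> t2 = z \<and> t3 = w @ t1)"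
      using cat_cases[OF eq bnd[of _ p q] SS TT] by blast
    have "e \<in> P (z,w)" unfolding P_def e using cs by auto
    moreover have "(z,w) \<in> Wk \<times> Wk" using zw by (simp add: Wk_def)
    ultimately show "e \<in> V3 \<inter> (\<Union>i\<in>Wk \<times> Wk. P i)" using v e unfolding V3_def by auto
  next
    fix e assume "e \<in> V3 \<inter> (\<Union>i\<in>Wk \<times> Wk. P i)"
    then show "e \<in> {((p,(s1,s2,s3)),(q,(t1,t2,t3))). valid X Y p q s1 t1 \<and> valid X Y p q s2 t2 \<and> valid X Y p q s3 t3 \<and> s1 @ t1 = s2 @ t2 @ s3 @ t3}"
      unfolding V3_def P_def by auto
  qed
  show ?thesis unfolding eqset using RV3 RUP finW by (intro RU_Int RU_UN) auto
qed

lemma ex_facs: "(\<exists>u\<in>facs (X p @ Y q). P u) \<longleftrightarrow> (\<exists>s t. valid X Y p q s t \<and> P (s @ t))"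
proof
  assume "\<exists>u\<in>facs (X p @ Y q). P u"
  then obtain u where "u \<in> facs (X p @ Y q)" "P u" by blast
  moreover obtain s t where "valid X Y p q s t" "u = s @ t" using fac_valid[of u X p Y q] calculation(1) by blast
  ultimately show "\<exists>s t. valid X Y p q s t \<and> P (s @ t)" by blast
next
  assume "\<exists>s t. valid X Y p q s t \<and> P (s @ t)"
  then obtain s t where "valid X Y p q s t" "P (s @ t)" by blast
  then show "\<exists>u\<in>facs (X p @ Y q). P u" using valid_fac[of X Y p q s t] by blast
qed

lemma all_facs: "(\<forall>u\<in>facs (X p @ Y q). P u) \<longleftrightarrow> (\<forall>s t. valid X Y p q s t \<longrightarrow> P (s @ t))"
  using ex_facs[of X p Y q "\<lambda>u. \<not> P u"] by blast

lemma main_ind: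
  fixes X :: "'p \<Rightarrow> ('a::finite) list" and Y :: "'q \<Rightarrow> 'a list"
  assumes bnd: "\<And>p q z. sublist z (X p) \<Longrightarrow> sublist z (Y q) \<Longrightarrow> length z \<le> K"
  shows "\<exists>S. RU S \<and> (\<forall>p q lv rv. allvalid X Y p q lv rv \<longrightarrow> (fc_sat (X p @ Y q) (enc lv rv) \<phi> \<longleftrightarrow> ((p,lv),(q,rv)) \<in> S))"
proof (induction \<phi>)
  case (FCat a b c)
  define CV where "CV = {((p,(s1,s2,s3)),(q,(t1,t2,t3))). valid X Y p q s1 t1 \<and> valid X Y p q s2 t2 \<and> valid X Y p q s3 t3 \<and> s1 @ t1 = s2 @ t2 @ s3 @ t3}"
  have RCV: "RU CV" unfolding CV_def by (rule catV_RU[OF bnd])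
  define TM where "TM = (\<lambda>tm::'a fc_term. {(((p::'p,lv),s),((q::'q,rv),t)). tmatch tm lv rv s t})"
  have RTM: "RU (TM tm)" for tm unfolding TM_def by (rule tmatch_RU)
  define T where "T = {(A,B). ((fst (fst A), snd A), (fst (fst B), snd B)) \<in> CV}
     \<inter> {(A,B). ((fst A, fst (snd A)), (fst B, fst (snd B))) \<in> TM a}
     \<inter> {(A,B). ((fst A, fst (snd (snd A))), (fst B, fst (snd (snd B)))) \<in> TM b}
     \<inter> {(A,B). ((fst A, snd (snd (snd A))), (fst B, snd (snd (snd B)))) \<in> TM c}"
  have RT: "RU T" unfolding T_def using RCV RTM by (intro RU_Int RU_pull)
  define S where "S = {(A0,B0). \<exists>l r. ((A0,l),(B0,r)) \<in> T}"
  have RS: "RU S" unfolding S_def using RT by (rule RU_proj)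
  have memS: "((p,lv),(q,rv)) \<in> S \<longleftrightarrow> (\<exists>s1 s2 s3 t1 t2 t3. valid X Y p q s1 t1 \<and> valid X Y p q s2 t2 \<and> valid X Y p q s3 t3 \<and> s1 @ t1 = s2 @ t2 @ s3 @ t3
     \<and> tmatch a lv rv s1 t1 \<and> tmatch b lv rv s2 t2 \<and> tmatch c lv rv s3 t3)" for p q lv rv
    unfolding S_def T_def CV_def TM_def by fastforce
  have "fc_sat (X p @ Y q) (enc lv rv) (FCat a b c) \<longleftrightarrow> ((p,lv),(q,rv)) \<in> S" if av: "allvalid X Y p q lv rv" for p q lv rv
  proof -
    note tl = term_lemma[OF av]
    have "fc_sat (X p @ Y q) (enc lv rv) (FCat a b c) \<longleftrightarrow>
      (\<exists>U V W. (term_val (X p @ Y q) (enc lv rv) a = Some U \<and> U \<in> facs (X p @ Y q))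
        \<and> (term_val (X p @ Y q) (enc lv rv) b = Some V \<and> V \<in> facs (X p @ Y q))
        \<and> (term_val (X p @ Y q) (enc lv rv) c = Some W \<and> W \<in> facs (X p @ Y q)) \<and> U = V @ W)"
      by auto
    also have "\<dots> \<longleftrightarrow> (\<exists>U V W. (\<exists>s t. valid X Y p q s t \<and> tmatch a lv rv s t \<and> U = s @ t)
        \<and> (\<exists>s t. valid X Y p q s t \<and> tmatch b lv rv s t \<and> V = s @ t)
        \<and> (\<exists>s t. valid X Y p q s t \<and> tmatch c lv rv s t \<and> W = s @ t) \<and> U = V @ W)"
      by (simp only: tl)
    also have "\<dots> \<longleftrightarrow> ((p,lv),(q,rv)) \<in> S"
      unfolding memS
    proof
      assume "\<exists>U V W. (\<exists>s t. valid X Y p q s t \<and> tmatch a lv rv s t \<and> U = s @ t)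
        \<and> (\<exists>s t. valid X Y p q s t \<and> tmatch b lv rv s t \<and> V = s @ t)
        \<and> (\<exists>s t. valid X Y p q s t \<and> tmatch c lv rv s t \<and> W = s @ t) \<and> U = V @ W"
      then obtain s1 t1 s2 t2 s3 t3 where "valid X Y p q s1 t1" "tmatch a lv rv s1 t1"
        "valid X Y p q s2 t2" "tmatch b lv rv s2 t2" "valid X Y p q s3 t3" "tmatch c lv rv s3 t3"
        "s1 @ t1 = (s2 @ t2) @ (s3 @ t3)" by blast
      then show "\<exists>s1 s2 s3 t1 t2 t3. valid X Y p q s1 t1 \<and> valid X Y p q s2 t2 \<and> valid X Y p q s3 t3 \<and> s1 @ t1 = s2 @ t2 @ s3 @ t3
     \<and> tmatch a lv rv s1 t1 \<and> tmatch b lv rv s2 t2 \<and> tmatch c lv rv s3 t3" by (metis append_assoc)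
    next
      assume "\<exists>s1 s2 s3 t1 t2 t3. valid X Y p q s1 t1 \<and> valid X Y p q s2 t2 \<and> valid X Y p q s3 t3 \<and> s1 @ t1 = s2 @ t2 @ s3 @ t3
     \<and> tmatch a lv rv s1 t1 \<and> tmatch b lv rv s2 t2 \<and> tmatch c lv rv s3 t3"
      then obtain s1 t1 s2 t2 s3 t3 where "valid X Y p q s1 t1" "tmatch a lv rv s1 t1"
        "valid X Y p q s2 t2" "tmatch b lv rv s2 t2" "valid X Y p q s3 t3" "tmatch c lv rv s3 t3"
        "s1 @ t1 = s2 @ t2 @ s3 @ t3" by blast
      moreover then have "s1 @ t1 = (s2 @ t2) @ (s3 @ t3)" by simp
      ultimately show "\<exists>U V W. (\<exists>s t. valid X Y p q s t \<and> tmatch a lv rv s t \<and> U = s @ t)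
        \<and> (\<exists>s t. valid X Y p q s t \<and> tmatch b lv rv s t \<and> V = s @ t)
        \<and> (\<exists>s t. valid X Y p q s t \<and> tmatch c lv rv s t \<and> W = s @ t) \<and> U = V @ W"
        by blast
    qed
    finally show ?thesis .
  qed
  then show ?case using RS by blast
next
  case (FAnd \<phi>1 \<phi>2)
  then obtain S1 S2 where "RU S1" "RU S2"
    "\<forall>p q lv rv. allvalid X Y p q lv rv \<longrightarrow> (fc_sat (X p @ Y q) (enc lv rv) \<phi>1 \<longleftrightarrow> ((p,lv),(q,rv)) \<in> S1)"
    "\<forall>p q lv rv. allvalid X Y p q lv rv \<longrightarrow> (fc_sat (X p @ Y q) (enc lv rv) \<phi>2 \<longleftrightarrow> ((p,lv),(q,rv)) \<in> S2)"
    by blast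
  then show ?case by (intro exI[of _ "S1 \<inter> S2"]) (auto intro: RU_Int)
next
  case (FOr \<phi>1 \<phi>2)
  then obtain S1 S2 where "RU S1" "RU S2"
    "\<forall>p q lv rv. allvalid X Y p q lv rv \<longrightarrow> (fc_sat (X p @ Y q) (enc lv rv) \<phi>1 \<longleftrightarrow> ((p,lv),(q,rv)) \<in> S1)"
    "\<forall>p q lv rv. allvalid X Y p q lv rv \<longrightarrow> (fc_sat (X p @ Y q) (enc lv rv) \<phi>2 \<longleftrightarrow> ((p,lv),(q,rv)) \<in> S2)"
    by blast
  then show ?case by (intro exI[of _ "S1 \<union> S2"]) (auto intro: RU_Un)
next
  case (FNot \<phi>)
  then obtain S1 where "RU S1"
    "\<forall>p q lv rv. allvalid X Y p q lv rv \<longrightarrow> (fc_sat (X p @ Y q) (enc lv rv) \<phi> \<longleftrightarrow> ((p,lv),(q,rv)) \<in> S1)"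
    by blast
  then show ?case by (intro exI[of _ "- S1"]) (auto intro: RU_Compl)
next
  case (FEx x \<phi>)
  then obtain S1 where R1: "RU S1" and H1:
    "\<forall>p q lv rv. allvalid X Y p q lv rv \<longrightarrow> (fc_sat (X p @ Y q) (enc lv rv) \<phi> \<longleftrightarrow> ((p,lv),(q,rv)) \<in> S1)"
    by blast
  define T where "T = {(A,B). ((fst (fst A), snd A), (fst (fst B), snd B)) \<in> {((p,s),(q,t)). valid X Y p q s t}}
     \<inter> {(A,B). ((fst (fst A), (snd (fst A))(x := Some (snd A))), (fst (fst B), (snd (fst B))(x := Some (snd B)))) \<in> S1}"
  have RT: "RU T" unfolding T_def using R1 valid_RU by (intro RU_Int RU_pull)
  define S where "S = {(A0,B0). \<exists>l r. ((A0,l),(B0,r)) \<in> T}"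
  have RS: "RU S" unfolding S_def using RT by (rule RU_proj)
  have "fc_sat (X p @ Y q) (enc lv rv) (FEx x \<phi>) \<longleftrightarrow> ((p,lv),(q,rv)) \<in> S" if av: "allvalid X Y p q lv rv" for p q lv rv
  proof -
    have "fc_sat (X p @ Y q) (enc lv rv) (FEx x \<phi>) \<longleftrightarrow>
      (\<exists>s t. valid X Y p q s t \<and> fc_sat (X p @ Y q) ((enc lv rv)(x := Some (s @ t))) \<phi>)"
      by (simp only: fc_sat.simps ex_facs)
    also have "\<dots> \<longleftrightarrow> (\<exists>s t. valid X Y p q s t \<and> fc_sat (X p @ Y q) (enc (lv(x := Some s)) (rv(x := Some t))) \<phi>)"
      by (simp add: enc_upd)
    also have "\<dots> \<longleftrightarrow> (\<exists>s t. valid X Y p q s t \<and> ((p, lv(x := Some s)),(q, rv(x := Some t))) \<in> S1)"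
      using H1 allvalid_upd[OF av] by blast
    also have "\<dots> \<longleftrightarrow> ((p,lv),(q,rv)) \<in> S" unfolding S_def T_def by auto
    finally show ?thesis .
  qed
  then show ?case using RS by blast
next
  case (FAll x \<phi>)
  then obtain S1 where R1: "RU S1" and H1:
    "\<forall>p q lv rv. allvalid X Y p q lv rv \<longrightarrow> (fc_sat (X p @ Y q) (enc lv rv) \<phi> \<longleftrightarrow> ((p,lv),(q,rv)) \<in> S1)"
    by blast
  define T where "T = {(A,B). ((fst (fst A), snd A), (fst (fst B), snd B)) \<in> {((p,s),(q,t)). valid X Y p q s t}}
     \<inter> {(A,B). ((fst (fst A), (snd (fst A))(x := Some (snd A))), (fst (fst B), (snd (fst B))(x := Some (snd B)))) \<in> - S1}"
  have RT: "RU T" unfolding T_def using R1 valid_RU by (intro RU_Int RU_pull RU_Compl)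
  define S where "S = - {(A0,B0). \<exists>l r. ((A0,l),(B0,r)) \<in> T}"
  have RS: "RU S" unfolding S_def using RT by (intro RU_Compl RU_proj)
  have "fc_sat (X p @ Y q) (enc lv rv) (FAll x \<phi>) \<longleftrightarrow> ((p,lv),(q,rv)) \<in> S" if av: "allvalid X Y p q lv rv" for p q lv rv
  proof -
    have "fc_sat (X p @ Y q) (enc lv rv) (FAll x \<phi>) \<longleftrightarrow>
      (\<forall>s t. valid X Y p q s t \<longrightarrow> fc_sat (X p @ Y q) ((enc lv rv)(x := Some (s @ t))) \<phi>)"
      by (simp only: fc_sat.simps all_facs)
    also have "\<dots> \<longleftrightarrow> (\<forall>s t. valid X Y p q s t \<longrightarrow> fc_sat (X p @ Y q) (enc (lv(x := Some s)) (rv(x := Some t))) \<phi>)"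
      by (simp add: enc_upd)
    also have "\<dots> \<longleftrightarrow> (\<forall>s t. valid X Y p q s t \<longrightarrow> ((p, lv(x := Some s)),(q, rv(x := Some t))) \<in> S1)"
      using H1 allvalid_upd[OF av] by blast
    also have "\<dots> \<longleftrightarrow> ((p,lv),(q,rv)) \<in> S" unfolding S_def T_def by auto
    finally show ?thesis .
  qed
  then show ?case using RS by blast
qed

lemma FC_slice_RU:
  fixes X :: "'p \<Rightarrow> ('a::finite) list" and Y :: "'q \<Rightarrow> 'a list"
  assumes bnd: "\<And>p q z. sublist z (X p) \<Longrightarrow> sublist z (Y q) \<Longrightarrow> length z \<le> K"
    and L: "L \<in> FC_languages"
  shows "RU {(p,q). X p @ Y q \<in> L}"
proof -
  obtain \<phi> where L: "L = fc_lang \<phi>" using L unfolding FC_languages_def by blast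
  have "\<exists>S. RU S \<and> (\<forall>p q lv rv. allvalid X Y p q lv rv \<longrightarrow> (fc_sat (X p @ Y q) (enc lv rv) \<phi> \<longleftrightarrow> ((p,lv),(q,rv)) \<in> S))"
    by (rule main_ind) (rule bnd)
  then obtain S where RS: "RU S" and H: "\<forall>p q lv rv. allvalid X Y p q lv rv \<longrightarrow> (fc_sat (X p @ Y q) (enc lv rv) \<phi> \<longleftrightarrow> ((p,lv),(q,rv)) \<in> S)"
    by blast
  have e: "enc (\<lambda>_. None) (\<lambda>_. None) = (\<lambda>_. None)" by (rule ext) (simp add: enc_def)
  have av: "allvalid X Y p q (\<lambda>_. None) (\<lambda>_. None)" for p q by (simp add: allvalid_def)
  have "{(p,q). X p @ Y q \<in> L} = {(p,q). ((p, \<lambda>_. None),(q, \<lambda>_. None)) \<in> S}"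
  proof -
    have "fc_sat (X p @ Y q) (\<lambda>_. None) \<phi> \<longleftrightarrow> ((p,\<lambda>_. None),(q,\<lambda>_. None)) \<in> S" for p q
      using H[rule_format, of p q "\<lambda>_. None" "\<lambda>_. None"] av[of p q] by (simp add: e)
    then show ?thesis by (auto simp: L fc_lang_def)
  qed
  then show ?thesis using RU_pull[OF RS] by simp
qed

lemma pw_Suc: "pw u (Suc n) = u @ pw u n" by (simp add: pw_def)
lemma pw_0: "pw u 0 = []" by (simp add: pw_def)
lemma pw_add: "pw u (m + n) = pw u m @ pw u n" by (simp add: pw_def replicate_add)
lemma pw_len: "length (pw u n) = n * length u" by (induct n) (simp_all add: pw_0 pw_Suc)
lemma pw_single: "pw [c] n = replicate n c" by (induct n) (simp_all add: pw_0 pw_Suc)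
lemma hd_pw: "pw u q \<noteq> [] \<Longrightarrow> u \<noteq> [] \<Longrightarrow> hd (pw u q) = hd u"
  by (cases q) (simp_all add: pw_0 pw_Suc)

lemma rep_U: "replicate i c @ t = replicate j c @ s \<Longrightarrow> (t = [] \<or> hd t \<noteq> c) \<Longrightarrow> (s = [] \<or> hd s \<noteq> c) \<Longrightarrow> i = j \<and> t = s"
proof (induction i arbitrary: j)
  case 0 then show ?case by (cases j) auto
next
  case (Suc i) then show ?case by (cases j) auto
qed

lemma sub_rep: "sublist z (replicate n c) \<Longrightarrow> z = replicate (length z) c"
proof -
  assume "sublist z (replicate n c)"
  then have "set z \<subseteq> set (replicate n c)" by (auto simp: sublist_def)
  then have "\<forall>y\<in>set z. y = c" by (auto split: if_splits)
  then show ?thesis by (simp add: replicate_length_same)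
qed

lemma sub2_of_rep: "length z \<ge> 2 \<Longrightarrow> z = replicate (length z) c \<Longrightarrow> sublist [c,c] z"
proof -
  assume a: "length z \<ge> 2" "z = replicate (length z) c"
  have "length z = Suc (Suc (length z - 2))" using a(1) by arith
  then have "z = c # c # replicate (length z - 2) c" using a(2) by (metis replicate_Suc)
  moreover have "prefix [c,c] (c # c # replicate (length z - 2) c)" by simp
  ultimately show ?thesis by (metis prefix_imp_sublist)
qed

lemma bound_left:
  assumes "\<And>q. \<not> sublist [c,c] (Y q)"
  shows "sublist z (replicate p c) \<Longrightarrow> sublist z (Y q) \<Longrightarrow> length z \<le> 1"
proof (rule ccontr)
  assume "sublist z (replicate p c)" "sublist z (Y q)" "\<not> length z \<le> 1"
  then have "sublist [c,c] z" using sub_rep sub2_of_rep by (metis not_le Suc_1 Suc_leI)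
  then show False using assms \<open>sublist z (Y q)\<close> sl_trans by blast
qed

lemma bound_right:
  assumes "\<And>p. \<not> sublist [c,c] (X p)"
  shows "sublist z (X p) \<Longrightarrow> sublist z (replicate q c) \<Longrightarrow> length z \<le> 1"
proof (rule ccontr)
  assume "sublist z (X p)" "sublist z (replicate q c)" "\<not> length z \<le> 1"
  then have "sublist [c,c] z" using sub_rep sub2_of_rep by (metis not_le Suc_1 Suc_leI)
  then show False using assms \<open>sublist z (X p)\<close> sl_trans by blast
qed

lemma sub2_Cons: "sublist [c,c] (x # w) \<longleftrightarrow> (x = c \<and> w \<noteq> [] \<and> hd w = c) \<or> sublist [c,c] w"
  by (cases w) (auto simp: sublist_Cons_right)

lemma sub2_rep: "x \<noteq> c \<Longrightarrow> sublist [c,c] (replicate n x @ w) \<longleftrightarrow> sublist [c,c] w"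
  by (induction n) (auto simp: sub2_Cons)

lemma noaa_ba: "a \<noteq> b \<Longrightarrow> \<not> sublist [a,a] (pw [b,a] q)"
proof (induction q)
  case 0 then show ?case by (simp add: pw_0)
next
  case (Suc q)
  have "pw [b,a] q = [] \<or> hd (pw [b,a] q) = b" using hd_pw[of "[b,a]" q] by auto
  then show ?case using Suc by (auto simp: pw_Suc sub2_Cons)
qed

lemma noaa_ab: "a \<noteq> b \<Longrightarrow> \<not> sublist [a,a] (pw [a,b] q)"
proof (induction q)
  case 0 then show ?case by (simp add: pw_0)
next
  case (Suc q)
  then show ?case by (auto simp: pw_Suc sub2_Cons)
qed

lemma pw_ba_hd: "pw [b,a] q = [] \<or> hd (pw [b,a] q) \<noteq> a" if "a \<noteq> b"
  using hd_pw[of "[b,a]" q] that by auto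

lemma L1_notFC:
  fixes a b :: "'a::finite"
  assumes ab: "a \<noteq> b"
  shows "{pw [a] n @ pw [b, a] n | n. True} \<notin> FC_languages"
proof
  define L where "L = {pw [a] n @ pw [b, a] n | n. True}"
  assume H: "{pw [a] n @ pw [b, a] n | n. True} \<in> FC_languages"
  then have H: "L \<in> FC_languages" unfolding L_def .
  have bnd: "sublist z ((\<lambda>p. replicate p a) p) \<Longrightarrow> sublist z ((\<lambda>q. pw [b,a] q) q) \<Longrightarrow> length z \<le> 1" for p q z
    using bound_left[of a "\<lambda>q. pw [b,a] q"] noaa_ba[OF ab] by blast
  define D where "D = {(p,q). replicate p a @ pw [b,a] q \<in> L}"
  have "RU {(p,q). (\<lambda>p. replicate p a) p @ (\<lambda>q. pw [b,a] q) q \<in> L}"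
    using FC_slice_RU[where X="\<lambda>p. replicate p a" and Y="\<lambda>q. pw [b,a] q" and K=1 and L=L] bnd H by blast
  then have RD: "RU D" unfolding D_def by simp
  have inD: "(n, n) \<in> D" for n
    unfolding D_def L_def pw_single by blast
  obtain n m where nm: "n \<noteq> m" "(n, m) \<in> D" using RU_pigeon[OF RD, of id id] inD by auto
  then obtain k where "replicate n a @ pw [b,a] m = replicate k a @ pw [b,a] k"
    unfolding D_def L_def pw_single by blast
  then have "n = k \<and> pw [b,a] m = pw [b,a] k" by (rule rep_U[OF _ pw_ba_hd[OF ab] pw_ba_hd[OF ab]])
  then have "n = k \<and> length (pw [b,a] m) = length (pw [b,a] k)" by simp
  then have "n = k \<and> m = k" by (simp add: pw_len)
  then show False using nm(1) by simp
qed

lemma parse1: "a \<noteq> b \<Longrightarrow> replicate n a @ pw [b,a] m = replicate i a @ pw [b,a] j \<Longrightarrow> n = i \<and> m = j"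
proof -
  assume ab: "a \<noteq> b" and e: "replicate n a @ pw [b,a] m = replicate i a @ pw [b,a] j"
  have "n = i \<and> pw [b,a] m = pw [b,a] j" by (rule rep_U[OF e pw_ba_hd[OF ab] pw_ba_hd[OF ab]])
  then have "n = i \<and> length (pw [b,a] m) = length (pw [b,a] j)" by simp
  then show ?thesis by (simp add: pw_len)
qed

lemma L2_notFC:
  fixes a b :: "'a::finite"
  assumes ab: "a \<noteq> b"
  shows "{pw [a] i @ pw [b, a] j | i j. 1 \<le> i \<and> i \<le> j} \<notin> FC_languages"
proof
  define L where "L = {pw [a] i @ pw [b, a] j | i j. 1 \<le> i \<and> i \<le> j}"
  assume H: "{pw [a] i @ pw [b, a] j | i j. 1 \<le> i \<and> i \<le> j} \<in> FC_languages"
  then have H: "L \<in> FC_languages" unfolding L_def .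
  have bnd: "sublist z ((\<lambda>p. replicate p a) p) \<Longrightarrow> sublist z ((\<lambda>q. pw [b,a] q) q) \<Longrightarrow> length z \<le> 1" for p q z
    using bound_left[of a "\<lambda>q. pw [b,a] q"] noaa_ba[OF ab] by blast
  define D where "D = {(p,q). replicate p a @ pw [b,a] q \<in> L}"
  have "RU {(p,q). (\<lambda>p. replicate p a) p @ (\<lambda>q. pw [b,a] q) q \<in> L}"
    using FC_slice_RU[where X="\<lambda>p. replicate p a" and Y="\<lambda>q. pw [b,a] q" and K=1 and L=L] bnd H by blast
  then have RD: "RU D" unfolding D_def by simp
  have inD: "(Suc n, Suc n) \<in> D" for n
    unfolding D_def L_def pw_single by fastforce
  obtain n m where nm: "n \<noteq> m" "(Suc n, Suc m) \<in> D" "(Suc m, Suc n) \<in> D"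
    using RU_pigeon[OF RD, of Suc Suc] inD by blast
  have le: "Suc x \<le> Suc y" if asm: "(Suc x, Suc y) \<in> D" for x y
  proof -
    obtain i j where "1 \<le> i" "i \<le> j" "replicate (Suc x) a @ pw [b,a] (Suc y) = replicate i a @ pw [b,a] j"
      using asm unfolding D_def L_def pw_single by blast
    then show ?thesis using parse1[OF ab] by metis
  qed
  show False using le[OF nm(2)] le[OF nm(3)] nm(1) by simp
qed

lemma L3_notFC:
  fixes a b :: "'a::finite"
  assumes ab: "a \<noteq> b"
  shows "{pw [b] n @ pw [a] m @ pw [b] (n + m) | n m. True} \<notin> FC_languages"
proof
  define L where "L = {pw [b] n @ pw [a] m @ pw [b] (n + m) | n m. True}"
  assume H: "{pw [b] n @ pw [a] m @ pw [b] (n + m) | n m. True} \<in> FC_languages"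
  then have H: "L \<in> FC_languages" unfolding L_def .
  have nob: "\<not> sublist [a,a] (replicate q b)" for q
    using sub2_rep[of b a q "[]"] ab by simp
  have bnd: "sublist z ((\<lambda>p. replicate p a) p) \<Longrightarrow> sublist z ((\<lambda>q. replicate q b) q) \<Longrightarrow> length z \<le> 1" for p q z
    using bound_left[of a "\<lambda>q. replicate q b"] nob by blast
  define D where "D = {(p,q). replicate p a @ replicate q b \<in> L}"
  have "RU {(p,q). (\<lambda>p. replicate p a) p @ (\<lambda>q. replicate q b) q \<in> L}"
    using FC_slice_RU[where X="\<lambda>p. replicate p a" and Y="\<lambda>q. replicate q b" and K=1 and L=L] bnd H by blast
  then have RD: "RU D" unfolding D_def by simp
  have inD: "(Suc n, Suc n) \<in> D" for n
  proof -
    have "replicate (Suc n) a @ replicate (Suc n) b = pw [b] 0 @ pw [a] (Suc n) @ pw [b] (0 + Suc n)"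
      by (simp add: pw_single)
    then show ?thesis unfolding D_def L_def by blast
  qed
  obtain n m where nm: "n \<noteq> m" "(Suc n, Suc m) \<in> D"
    using RU_pigeon[OF RD, of Suc Suc] inD by blast
  then obtain N M where e: "replicate (Suc n) a @ replicate (Suc m) b = replicate N b @ replicate M a @ replicate (N + M) b"
    unfolding D_def L_def pw_single by blast
  have N0: "N = 0"
  proof (rule ccontr)
    assume "N \<noteq> 0"
    then obtain N' where "N = Suc N'" by (cases N) auto
    then show False using e ab by simp
  qed
  then have e2: "replicate (Suc n) a @ replicate (Suc m) b = replicate M a @ replicate M b" using e by simp
  have h1: "replicate (Suc m) b = [] \<or> hd (replicate (Suc m) b) \<noteq> a" using ab by simp
  have h2: "replicate M b = [] \<or> hd (replicate M b) \<noteq> a" using ab by (cases M) auto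
  have "Suc n = M \<and> replicate (Suc m) b = replicate M b" by (rule rep_U[OF e2 h1 h2])
  then have "Suc n = M \<and> Suc m = M" by (metis length_replicate)
  then show False using nm(1) by simp
qed

lemma L4_notFC:
  fixes a b :: "'a::finite"
  assumes ab: "a \<noteq> b"
  shows "{pw [b] n @ pw [a] m @ pw [b] (n * m) | n m. True} \<notin> FC_languages"
proof
  define L where "L = {pw [b] n @ pw [a] m @ pw [b] (n * m) | n m. True}"
  assume H: "{pw [b] n @ pw [a] m @ pw [b] (n * m) | n m. True} \<in> FC_languages"
  then have H: "L \<in> FC_languages" unfolding L_def .
  have nob: "\<not> sublist [b,b] (b # replicate (Suc p) a)" for p
    using sub2_rep[of a b "Suc p" "[]"] ab by (simp add: sub2_Cons)
  have bnd: "sublist z ((\<lambda>p. b # replicate (Suc p) a) p) \<Longrightarrow> sublist z ((\<lambda>q. replicate (Suc q) b) q) \<Longrightarrow> length z \<le> 1" for p q z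
    using bound_right[of b "\<lambda>p. b # replicate (Suc p) a"] nob by blast
  define D where "D = {(p,q). (b # replicate (Suc p) a) @ replicate (Suc q) b \<in> L}"
  have "RU {(p,q). (\<lambda>p. b # replicate (Suc p) a) p @ (\<lambda>q. replicate (Suc q) b) q \<in> L}"
    using FC_slice_RU[where X="\<lambda>p. b # replicate (Suc p) a" and Y="\<lambda>q. replicate (Suc q) b" and K=1 and L=L] bnd H by blast
  then have RD: "RU D" unfolding D_def by simp
  have inD: "(n, n) \<in> D" for n
  proof -
    have "(b # replicate (Suc n) a) @ replicate (Suc n) b = pw [b] 1 @ pw [a] (Suc n) @ pw [b] (1 * Suc n)"
      by (simp add: pw_single)
    then show ?thesis unfolding D_def L_def by blast
  qed
  obtain n m where nm: "n \<noteq> m" "(n, m) \<in> D"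
    using RU_pigeon[OF RD, of id id] inD by auto
  then obtain N M where e: "(b # replicate (Suc n) a) @ replicate (Suc m) b = replicate N b @ replicate M a @ replicate (N * M) b"
    unfolding D_def L_def pw_single by blast
  have e1: "replicate 1 b @ (replicate (Suc n) a @ replicate (Suc m) b) = replicate N b @ (replicate M a @ replicate (N * M) b)"
    using e by simp
  have h1: "replicate (Suc n) a @ replicate (Suc m) b = [] \<or> hd (replicate (Suc n) a @ replicate (Suc m) b) \<noteq> b" using ab by simp
  have h2: "replicate M a @ replicate (N * M) b = [] \<or> hd (replicate M a @ replicate (N * M) b) \<noteq> b" using ab by (cases M) auto
  have r: "1 = N \<and> replicate (Suc n) a @ replicate (Suc m) b = replicate M a @ replicate (N * M) b"
    by (rule rep_U[OF e1 h1 h2])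
  then have e2: "replicate (Suc n) a @ replicate (Suc m) b = replicate M a @ replicate M b" by simp
  have h3: "replicate (Suc m) b = [] \<or> hd (replicate (Suc m) b) \<noteq> a" using ab by simp
  have h4: "replicate M b = [] \<or> hd (replicate M b) \<noteq> a" using ab by (cases M) auto
  have "Suc n = M \<and> replicate (Suc m) b = replicate M b" by (rule rep_U[OF e2 h3 h4])
  then have "Suc n = M \<and> Suc m = M" by (metis length_replicate)
  then show False using nm(1) by simp
qed

lemma L6_notFC:
  fixes a b :: "'a::finite"
  assumes ab: "a \<noteq> b"
  shows "{pw [a] n @ pw [b] n @ pw [a, b] n | n. True} \<notin> FC_languages"
proof
  define L where "L = {pw [a] n @ pw [b] n @ pw [a, b] n | n. True}"
  assume H: "{pw [a] n @ pw [b] n @ pw [a, b] n | n. True} \<in> FC_languages"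
  then have H: "L \<in> FC_languages" unfolding L_def .
  have noa: "\<not> sublist [a,a] (replicate q b @ pw [a,b] q)" for q
    using sub2_rep[of b a q "pw [a,b] q"] ab noaa_ab[OF ab] by simp
  have bnd: "sublist z ((\<lambda>p. replicate p a) p) \<Longrightarrow> sublist z ((\<lambda>q. replicate q b @ pw [a,b] q) q) \<Longrightarrow> length z \<le> 1" for p q z
    using bound_left[of a "\<lambda>q. replicate q b @ pw [a,b] q"] noa by blast
  define D where "D = {(p,q). replicate p a @ (replicate q b @ pw [a,b] q) \<in> L}"
  have "RU {(p,q). (\<lambda>p. replicate p a) p @ (\<lambda>q. replicate q b @ pw [a,b] q) q \<in> L}"
    using FC_slice_RU[where X="\<lambda>p. replicate p a" and Y="\<lambda>q. replicate q b @ pw [a,b] q" and K=1 and L=L] bnd H by blast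
  then have RD: "RU D" unfolding D_def by simp
  have inD: "(n, n) \<in> D" for n
    unfolding D_def L_def pw_single by blast
  obtain n m where nm: "n \<noteq> m" "(n, m) \<in> D"
    using RU_pigeon[OF RD, of id id] inD by auto
  then obtain k where e: "replicate n a @ (replicate m b @ pw [a,b] m) = replicate k a @ (replicate k b @ pw [a,b] k)"
    unfolding D_def L_def pw_single by auto
  have h: "replicate j b @ pw [a,b] j = [] \<or> hd (replicate j b @ pw [a,b] j) \<noteq> a" for j
    using ab by (cases j) (auto simp: pw_0)
  have "n = k \<and> replicate m b @ pw [a,b] m = replicate k b @ pw [a,b] k" by (rule rep_U[OF e h h])
  then have "length (replicate m b @ pw [a,b] m) = length (replicate k b @ pw [a,b] k)" by simp
  then have "m = k" by (simp add: pw_len)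
  then show False using nm(1) \<open>n = k \<and> _\<close> by simp
qed

lemma pw_sub2: "length w \<le> length u \<Longrightarrow> sublist w (pw u p) \<Longrightarrow> sublist w (u @ u)"
proof (induction p)
  case 0 then show ?case by (simp add: pw_0)
next
  case (Suc p)
  have "sublist w u \<or> sublist w (pw u p) \<or> (\<exists>xs1 xs2. w = xs1 @ xs2 \<and> suffix xs1 u \<and> prefix xs2 (pw u p))"
    using Suc.prems(2) by (simp add: pw_Suc sublist_append)
  then show ?case
  proof (elim disjE exE conjE)
    assume "sublist w u" then show ?thesis using sl_trans sublist_append_rightI by blast
  next
    assume "sublist w (pw u p)" then show ?thesis using Suc by blast
  next
    fix xs1 xs2 assume w: "w = xs1 @ xs2" and s: "suffix xs1 u" and pr: "prefix xs2 (pw u p)"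
    have "prefix xs2 u"
    proof (cases p)
      case 0 then show ?thesis using pr by (simp add: pw_0)
    next
      case (Suc p')
      have "prefix u (pw u p)" using Suc by (simp add: pw_Suc)
      moreover have "length xs2 \<le> length u" using w Suc.prems(1) by simp
      ultimately show ?thesis using pr prefix_length_prefix by blast
    qed
    then show ?thesis using w s unfolding sublist_append by blast
  qed
qed

lemma window: "sublist w xs \<Longrightarrow> \<exists>i. i + length w \<le> length xs \<and> w = take (length w) (drop i xs)"
proof -
  assume "sublist w xs"
  then obtain ps ss where "xs = ps @ w @ ss" by (auto simp: sublist_def)
  then show ?thesis by (intro exI[of _ "length ps"]) simp
qed

lemma le7: "(i::nat) \<le> 7 \<Longrightarrow> i = 0 \<or> i = 1 \<or> i = 2 \<or> i = 3 \<or> i = 4 \<or> i = 5 \<or> i = 6 \<or> i = 7"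
  by linarith

lemma check5:
  assumes ab: "a \<noteq> b" and i: "i \<le> 7" and j: "j \<le> 7"
  shows "take 5 (drop i [a,b,a,a,b,b,a,b,a,a,b,b]) \<noteq> take 5 (drop j [b,b,a,a,b,a,b,b,a,a,b,a])"
proof -
  have ba: "b \<noteq> a" using ab by simp
  have A: "take 5 (drop i [a,b,a,a,b,b,a,b,a,a,b,b]) \<in> {[a,b,a,a,b],[b,a,a,b,b],[a,a,b,b,a],[a,b,b,a,b],[b,b,a,b,a],[b,a,b,a,a],[a,b,a,a,b],[b,a,a,b,b]}"
    using le7[OF i] by (elim disjE) simp_all
  have B: "take 5 (drop j [b,b,a,a,b,a,b,b,a,a,b,a]) \<in> {[b,b,a,a,b],[b,a,a,b,a],[a,a,b,a,b],[a,b,a,b,b],[b,a,b,b,a],[a,b,b,a,a],[b,b,a,a,b],[b,a,a,b,a]}"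
    using le7[OF j] by (elim disjE) simp_all
  show ?thesis
  proof
    assume e: "take 5 (drop i [a,b,a,a,b,b,a,b,a,a,b,b]) = take 5 (drop j [b,b,a,a,b,a,b,b,a,a,b,a])"
    show False using A B ab ba unfolding e by auto
  qed
qed

lemma bnd5:
  assumes ab: "(a::'a) \<noteq> b"
  shows "sublist z (pw [a,b,a,a,b,b] p) \<Longrightarrow> sublist z (pw [b,b,a,a,b,a] q) \<Longrightarrow> length z \<le> 4"
proof (rule ccontr)
  assume s1: "sublist z (pw [a,b,a,a,b,b] p)" and s2: "sublist z (pw [b,b,a,a,b,a] q)" and "\<not> length z \<le> 4"
  define w where "w = take 5 z"
  have lw: "length w = 5" unfolding w_def using \<open>\<not> length z \<le> 4\<close> by simp
  have wz: "sublist w z" unfolding w_def by (rule prefix_imp_sublist[OF take_is_prefix])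
  have "sublist w ([a,b,a,a,b,b] @ [a,b,a,a,b,b])"
    by (rule pw_sub2) (use lw sl_trans[OF wz s1] in auto)
  then obtain i where "i + length w \<le> length ([a,b,a,a,b,b] @ [a,b,a,a,b,b])" "w = take (length w) (drop i ([a,b,a,a,b,b] @ [a,b,a,a,b,b]))"
    using window by blast
  then have i: "i + 5 \<le> 12" "w = take 5 (drop i [a,b,a,a,b,b,a,b,a,a,b,b])" using lw by simp_all
  have "sublist w ([b,b,a,a,b,a] @ [b,b,a,a,b,a])"
    by (rule pw_sub2) (use lw sl_trans[OF wz s2] in auto)
  then obtain j where "j + length w \<le> length ([b,b,a,a,b,a] @ [b,b,a,a,b,a])" "w = take (length w) (drop j ([b,b,a,a,b,a] @ [b,b,a,a,b,a]))"
    using window by blast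
  then have j: "j + 5 \<le> 12" "w = take 5 (drop j [b,b,a,a,b,a,b,b,a,a,b,a])" using lw by simp_all
  have "i \<le> 7" "j \<le> 7" using i(1) j(1) by linarith+
  from check5[OF ab this] i(2) j(2) show False by simp
qed

lemma parse5_lt:
  assumes ab: "a \<noteq> b" and nk: "n < k"
    and e: "pw [a,b,a,a,b,b] n @ pw [b,b,a,a,b,a] m = pw [a,b,a,a,b,b] k @ pw [b,b,a,a,b,a] l"
  shows False
proof -
  obtain r where k: "k = Suc (n + r)" using less_imp_Suc_add[OF nk] by blast
  have "pw [a,b,a,a,b,b] k = pw [a,b,a,a,b,b] n @ pw [a,b,a,a,b,b] (Suc r)"
    unfolding k using pw_add[of "[a,b,a,a,b,b]" n "Suc r"] by simp
  then have "pw [a,b,a,a,b,b] n @ pw [b,b,a,a,b,a] m = pw [a,b,a,a,b,b] n @ (pw [a,b,a,a,b,b] (Suc r) @ pw [b,b,a,a,b,a] l)"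
    using e by simp
  then have "pw [b,b,a,a,b,a] m = pw [a,b,a,a,b,b] (Suc r) @ pw [b,b,a,a,b,a] l" by simp
  then show False using ab by (cases m) (simp_all add: pw_Suc pw_0)
qed

lemma parse5_gt:
  assumes ab: "a \<noteq> b" and nk: "k < n"
    and e: "pw [a,b,a,a,b,b] n @ pw [b,b,a,a,b,a] m = pw [a,b,a,a,b,b] k @ pw [b,b,a,a,b,a] l"
  shows False
  using parse5_lt[OF ab nk e[symmetric]] .

lemma L5_notFC:
  fixes a b :: "'a::finite"
  assumes ab: "a \<noteq> b"
  shows "{pw [a, b, a, a, b, b] m @ pw [b, b, a, a, b, a] m | m. True} \<notin> FC_languages"
proof
  define L where "L = {pw [a, b, a, a, b, b] m @ pw [b, b, a, a, b, a] m | m. True}"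
  assume H: "{pw [a, b, a, a, b, b] m @ pw [b, b, a, a, b, a] m | m. True} \<in> FC_languages"
  then have H: "L \<in> FC_languages" unfolding L_def .
  have bnd: "sublist z ((\<lambda>p. pw [a,b,a,a,b,b] p) p) \<Longrightarrow> sublist z ((\<lambda>q. pw [b,b,a,a,b,a] q) q) \<Longrightarrow> length z \<le> 4" for p q z
    using bnd5[OF ab] by blast
  define D where "D = {(p,q). pw [a,b,a,a,b,b] p @ pw [b,b,a,a,b,a] q \<in> L}"
  have "RU {(p,q). (\<lambda>p. pw [a,b,a,a,b,b] p) p @ (\<lambda>q. pw [b,b,a,a,b,a] q) q \<in> L}"
    using FC_slice_RU[where X="\<lambda>p. pw [a,b,a,a,b,b] p" and Y="\<lambda>q. pw [b,b,a,a,b,a] q" and K=4 and L=L] bnd H by blast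
  then have RD: "RU D" unfolding D_def by simp
  have inD: "(n, n) \<in> D" for n
    unfolding D_def L_def by blast
  obtain n m where nm: "n \<noteq> m" "(n, m) \<in> D"
    using RU_pigeon[OF RD, of id id] inD by auto
  then obtain k where e: "pw [a,b,a,a,b,b] n @ pw [b,b,a,a,b,a] m = pw [a,b,a,a,b,b] k @ pw [b,b,a,a,b,a] k"
    unfolding D_def L_def by blast
  have nk: "n = k" using parse5_lt[OF ab _ e] parse5_gt[OF ab _ e] by (meson linorder_neqE_nat)
  then have "pw [b,b,a,a,b,a] m = pw [b,b,a,a,b,a] k" using e by simp
  then have "length (pw [b,b,a,a,b,a] m) = length (pw [b,b,a,a,b,a] k)" by simp
  then have "m = k" by (simp add: pw_len)
  then show False using nm(1) nk by simp
qed

theorem lemma4p14: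
  fixes a b :: "'a::finite"
  assumes "a \<noteq> b"
  shows "{pw [a] n @ pw [b, a] n | n. True} \<notin> FC_languages \<and>
         {pw [a] i @ pw [b, a] j | i j. 1 \<le> i \<and> i \<le> j} \<notin> FC_languages \<and>
         {pw [b] n @ pw [a] m @ pw [b] (n + m) | n m. True} \<notin> FC_languages \<and>
         {pw [b] n @ pw [a] m @ pw [b] (n * m) | n m. True} \<notin> FC_languages \<and>
         {pw [a, b, a, a, b, b] m @ pw [b, b, a, a, b, a] m | m. True} \<notin> FC_languages \<and>
         {pw [a] n @ pw [b] n @ pw [a, b] n | n. True} \<notin> FC_languages"
  using L1_notFC[OF assms] L2_notFC[OF assms] L3_notFC[OF assms] L4_notFC[OF assms]
    L5_notFC[OF assms] L6_notFC[OF assms] by blast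

end
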